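(* Let $\Xi\subseteq\mathbb{R}^d$ be a Polish space with Borel $\sigma$-algebra, equipped with a norm $\|\cdot\|$, and let $\boldsymbol{\xi}_1,\boldsymbol{\xi}_2,\dots$ be independent $\Xi$-valued random variables, $\boldsymbol{\xi}_i$ having distribution $\mathbb{P}_i$. Let $\rho:\mathbb{R}_+\to\mathbb{R}_+$ with $\rho(0)=0$ satisfy $W(\mathbb{P}_i,\mathbb{P}_{i+k})\le\rho(k)$ for all $i\ge1$, $k\ge0$. Let $\mathcal{X}\subseteq\mathbb{R}^n$ be finite, $g:\mathbb{R}^n\times\mathbb{R}^d\to\mathbb{R}$ with $g(x,\cdot)$ measurable for every $x$, and $\epsilon\in(0,1]$. Let $\delta\in(0,1)$, $\alpha\in(0,\epsilon)$, $\theta\in(0,\epsilon-\alpha)$, and let $N$ be a positive integer with $$N\ge\frac{1}{2(\epsilon-\alpha-\theta)^2}\ln\left(\frac{|\mathcal{X}|}{\delta}\right).$$ Set $r_i:=\rho(N+1-i)/\theta$ for $i\in[N]$, $U_{r_i}(\boldsymbol{\xi}_i):=\{u\in\Xi:\|u-\boldsymbol{\xi}_i\|\le r_i\}$, $$\widehat v^r(x):=\frac1N\sum_{i=1}^N\mathbb{1}\{\exists\,u\in U_{r_i}(\boldsymbol{\xi}_i)\text{ with }g(x,u)>0\},\qquad \widehat{\mathcal{X}}^r_\alpha:=\{x\in\mathcal{X}:\widehat v^r(x)\le\alpha\},$$ and $\mathcal{X}^{N+1}_\epsilon:=\{x\in\mathcal{X}:\mathbb{P}(g(x,\boldsymbol{\xi}_{N+1})>0)\le\epsilon\}$.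 Then $\mathbb{P}\big(\widehat{\mathcal{X}}^r_\alpha\subseteq\mathcal{X}^{N+1}_\epsilon\big)\ge1-\delta$.
   Context: The 1-Wasserstein distance between probability measures $\mathbb{P},\mathbb{P}'$ on $\Xi$ is $W(\mathbb{P},\mathbb{P}'):=\inf_{\pi\in\Pi(\mathbb{P},\mathbb{P}')}\int_{\Xi\times\Xi}\|\xi-\xi'\|\,\pi(d\xi,d\xi')$, where $\Pi(\mathbb{P},\mathbb{P}')$ is the set of couplings with marginals $\mathbb{P},\mathbb{P}'$. $\mathbb{1}\{\cdot\}$ is the indicator function; $[N]=\{1,\dots,N\}$. *)

theory Defs
  imports "HOL-Probability.Probability"
begin

definition is_norm :: "('a::real_vector \<Rightarrow> real) \<Rightarrow> bool" where
  "is_norm nrm \<longleftrightarrow>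
     (\<forall>x. 0 \<le> nrm x) \<and> (\<forall>x. nrm x = 0 \<longleftrightarrow> x = 0) \<and>
     (\<forall>c x. nrm (c *\<^sub>R x) = \<bar>c\<bar> * nrm x) \<and>
     (\<forall>x y. nrm (x + y) \<le> nrm x + nrm y)"

definition polish_subset :: "'a::topological_space set \<Rightarrow> bool" where
  "polish_subset S \<longleftrightarrow>
     completely_metrizable_space (subtopology euclidean S) \<and>
     separable_space (subtopology euclidean S)"

definition couplings ::
  "'a::topological_space measure \<Rightarrow> 'a measure \<Rightarrow> ('a \<times> 'a) measure set" where
  "couplings P Q = {\<pi>. prob_space \<pi> \<and> sets \<pi> = sets (borel \<Otimes>\<^sub>M borel) \<and>
                        distr \<pi> borel fst = P \<and> distr \<pi> borel snd = Q}"

definition wasserstein1 ::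
  "('a::real_normed_vector \<Rightarrow> real) \<Rightarrow> 'a measure \<Rightarrow> 'a measure \<Rightarrow> ennreal" where
  "wasserstein1 nrm P Q =
     (INF \<pi>\<in>couplings P Q. \<integral>\<^sup>+ z. ennreal (nrm (fst z - snd z)) \<partial>\<pi>)"

end

theory Submission
  imports Defs
begin


lemma norm_sum_le:
  assumes "is_norm nrm" "finite S"
  shows "nrm (\<Sum>i\<in>S. f i) \<le> (\<Sum>i\<in>S. nrm (f i))"
  using assms(2)
proof induction
  case empty
  have "nrm 0 = 0" using assms(1) unfolding is_norm_def by blast
  then show ?case by simp
next
  case (insert x F)
  show ?case
  proof -
    have "nrm (sum f (insert x F)) = nrm (f x + sum f F)" using insert(1,2) by simp
    also have "\<dots> \<le> nrm (f x) + nrm (sum f F)" using assms(1) unfolding is_norm_def by blast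
    also have "\<dots> \<le> nrm (f x) + (\<Sum>i\<in>F. nrm (f i))" using insert(3) by simp
    also have "\<dots> = (\<Sum>i\<in>insert x F. nrm (f i))" using insert(1,2) by simp
    finally show ?thesis .
  qed
qed

lemma norm_bound:
  fixes nrm :: "'a::euclidean_space \<Rightarrow> real"
  assumes "is_norm nrm"
  shows "nrm x \<le> (\<Sum>b\<in>Basis. nrm b) * norm x"
proof -
  have "nrm x = nrm (\<Sum>b\<in>Basis. inner x b *\<^sub>R b)" by (simp add: euclidean_representation)
  also have "\<dots> \<le> (\<Sum>b\<in>Basis. nrm (inner x b *\<^sub>R b))" by (rule norm_sum_le[OF assms]) simp
  also have "\<dots> = (\<Sum>b\<in>Basis. \<bar>inner x b\<bar> * nrm b)" using assms unfolding is_norm_def by simp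
  also have "\<dots> \<le> (\<Sum>b\<in>Basis. norm x * nrm b)"
    apply (rule sum_mono) apply (rule mult_right_mono)
    using Basis_le_norm assms unfolding is_norm_def by auto
  also have "\<dots> = norm x * (\<Sum>b\<in>Basis. nrm b)" by (simp add: sum_distrib_left)
  finally show ?thesis by (simp add: mult.commute)
qed

lemma norm_minus_sym:
  assumes "is_norm nrm"
  shows "nrm (x - y) = nrm (y - x)"
proof -
  have "nrm (x - y) = nrm ((-1) *\<^sub>R (y - x))" by simp
  also have "\<dots> = \<bar>-1\<bar> * nrm (y - x)" using assms unfolding is_norm_def by blast
  also have "\<dots> = nrm (y - x)" by simp
  finally show ?thesis .
qed

lemma norm_lip:
  assumes "is_norm nrm"
  shows "\<bar>nrm x - nrm y\<bar> \<le> nrm (x - y)"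
proof -
  have "nrm x \<le> nrm (x - y) + nrm y" using assms unfolding is_norm_def
    by (metis diff_add_cancel)
  moreover have "nrm y \<le> nrm (y - x) + nrm x" using assms unfolding is_norm_def
    by (metis diff_add_cancel)
  ultimately show ?thesis using norm_minus_sym[OF assms, of x y] by linarith
qed

lemma norm_continuous:
  fixes nrm :: "'a::euclidean_space \<Rightarrow> real"
  assumes "is_norm nrm"
  shows "continuous_on UNIV nrm"
proof -
  define C where "C = (\<Sum>b\<in>Basis. nrm b) + 1"
  have C: "C > 0" unfolding C_def using assms unfolding is_norm_def by (simp add: sum_nonneg add_nonneg_pos)
  have "dist (nrm x) (nrm y) \<le> C * dist x y" for x y
  proof -
    have "dist (nrm x) (nrm y) \<le> nrm (x - y)" using norm_lip[OF assms] by (simp add: dist_real_def)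
    also have "\<dots> \<le> (\<Sum>b\<in>Basis. nrm b) * norm (x - y)" by (rule norm_bound[OF assms])
    also have "\<dots> \<le> C * norm (x - y)" unfolding C_def by (simp add: distrib_right)
    finally show ?thesis by (simp add: dist_norm)
  qed
  then have "C-lipschitz_on UNIV nrm" by (intro lipschitz_onI) (use C in auto)
  then show ?thesis by (rule lipschitz_on_continuous_on)
qed

lemma norm_measurable:
  fixes nrm :: "'a::euclidean_space \<Rightarrow> real"
  assumes "is_norm nrm"
  shows "nrm \<in> borel_measurable borel"
  using norm_continuous[OF assms] by (rule borel_measurable_continuous_onI)

definition thick where "thick nrm K t = {v. \<exists>u\<in>K. nrm (u - v) \<le> t}"

lemma thick_closed:
  fixes nrm :: "'a::euclidean_space \<Rightarrow> real"
  assumes "is_norm nrm" "compact K"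
  shows "closed (thick nrm K t)"
proof -
  have cl: "closed {w. nrm w \<le> t}"
    using norm_continuous[OF assms(1)] by (simp add: closed_Collect_le continuous_on_const)
  have "thick nrm K t = (\<Union>x\<in>{w. nrm w \<le> t}. \<Union>y\<in>K. {x + y})"
    unfolding thick_def
  proof safe
    fix v u assume "u \<in> K" "nrm (u - v) \<le> t"
    then show "v \<in> (\<Union>x\<in>{w. nrm w \<le> t}. \<Union>y\<in>K. {x + y})"
      using norm_minus_sym[OF assms(1), of u v] by (auto intro!: bexI[of _ "v - u"] bexI[of _ u])
  next
    fix w y assume "nrm w \<le> t" "y \<in> K"
    then show "\<exists>u\<in>K. nrm (u - (w + y)) \<le> t"
      using norm_minus_sym[OF assms(1), of y "w + y"] by (auto intro!: bexI[of _ y])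
  qed
  then show ?thesis using closed_compact_sums[OF cl assms(2)] by simp
qed

lemma thick_Inter:
  fixes nrm :: "'a::euclidean_space \<Rightarrow> real"
  assumes "is_norm nrm" "compact K"
  shows "(\<Inter>n. thick nrm K (t + 1 / Suc n)) = thick nrm K t"
proof safe
  fix v assume v: "v \<in> (\<Inter>n. thick nrm K (t + 1 / Suc n))"
  then have "v \<in> thick nrm K (t + 1 / Suc 0)" by blast
  then have "K \<noteq> {}" unfolding thick_def by auto
  moreover have "continuous_on K (\<lambda>u. nrm (u - v))"
  proof -
    have "continuous_on UNIV (\<lambda>u. u - v)" by (intro continuous_intros)
    then have "continuous_on UNIV (\<lambda>u. nrm (u - v))"
      by (rule continuous_on_compose2[OF norm_continuous[OF assms(1)]]) simp
    then show ?thesis by (rule continuous_on_subset) simp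
  qed
  ultimately obtain u0 where u0: "u0 \<in> K" "\<And>y. y \<in> K \<Longrightarrow> nrm (u0 - v) \<le> nrm (y - v)"
    using continuous_attains_inf[OF assms(2)] by blast
  have le: "nrm (u0 - v) \<le> t + 1 / Suc n" for n
  proof -
    from v have "v \<in> thick nrm K (t + 1 / Suc n)" by blast
    then obtain u where "u \<in> K" "nrm (u - v) \<le> t + 1 / Suc n" unfolding thick_def by blast
    then show ?thesis using u0(2)[of u] by linarith
  qed
  have "nrm (u0 - v) \<le> t"
  proof (rule ccontr)
    assume "\<not> nrm (u0 - v) \<le> t"
    then have "nrm (u0 - v) - t > 0" by simp
    then obtain n where "1 / real (Suc n) < nrm (u0 - v) - t" by (rule nat_approx_posE)
    then show False using le[of n] by linarith
  qed
  then show "v \<in> thick nrm K t" using u0 unfolding thick_def by blast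
next
  fix v n assume "v \<in> thick nrm K t"
  then obtain u where u: "u \<in> K" "nrm (u - v) \<le> t" unfolding thick_def by blast
  have "0 \<le> 1 / real (Suc n)" by simp
  then have "nrm (u - v) \<le> t + 1 / Suc n" using u(2) by linarith
  then show "v \<in> thick nrm K (t + 1 / Suc n)" using u(1) unfolding thick_def by blast
qed



lemma thick_mono: 
  fixes s t :: real
  assumes "s \<le> t" shows "thick nrm K s \<subseteq> thick nrm K t"
proof
  fix v assume "v \<in> thick nrm K s"
  then obtain u where "u \<in> K" "nrm (u - v) \<le> s" unfolding thick_def by auto
  then show "v \<in> thick nrm K t" using assms unfolding thick_def by (auto intro!: bexI[of _ u])
qed

lemma transport_step:
  fixes nrm :: "'a::euclidean_space \<Rightarrow> real"
  assumes nrm: "is_norm nrm" and K: "compact K"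
    and W: "wasserstein1 nrm P Q \<le> ennreal \<rho>"
    and r: "r \<ge> 0" and th: "\<theta> > 0" and rho: "\<rho> = r * \<theta>" and s: "s > 0"
  shows "measure Q K \<le> measure P (thick nrm K (r + s)) + \<theta> + s"
proof -
  have rho0: "\<rho> \<ge> 0" using rho r th by simp
  have "ennreal \<rho> < ennreal (\<rho> + s * s)"
    using s rho0 by (intro ennreal_lessI) (auto simp: add_nonneg_pos)
  then have "wasserstein1 nrm P Q < ennreal (\<rho> + s * s)"
    using W by (rule le_less_trans[rotated])
  then obtain \<pi> where pi: "\<pi> \<in> couplings P Q"
     and int: "(\<integral>\<^sup>+ z. ennreal (nrm (fst z - snd z)) \<partial>\<pi>) < ennreal (\<rho> + s * s)"
    unfolding wasserstein1_def by (auto simp: INF_less_iff)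
  have ps: "prob_space \<pi>" and sp: "sets \<pi> = sets (borel \<Otimes>\<^sub>M borel)"
    and dP: "distr \<pi> borel fst = P" and dQ: "distr \<pi> borel snd = Q"
    using pi unfolding couplings_def by auto
  interpret pi: prob_space \<pi> by (rule ps)
  have mf: "fst \<in> measurable \<pi> borel" "snd \<in> measurable \<pi> borel"
    using measurable_cong_sets[OF sp refl] by auto
  have mD: "(\<lambda>z. nrm (fst z - snd z)) \<in> borel_measurable \<pi>"
    using mf by (intro measurable_compose[OF _ norm_measurable[OF nrm]] borel_measurable_diff) auto
  define c where "c = r + s"
  have c: "c > 0" using r s c_def by simp
  define T where "T = thick nrm K c"
  have Tb: "T \<in> sets borel" unfolding T_def using thick_closed[OF nrm K] by simp
  have Kb: "K \<in> sets borel" using K by (simp add: compact_imp_closed)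
  define S where "S = {z\<in>space \<pi>. c \<le> nrm (fst z - snd z)}"
  have Ss: "S \<in> sets \<pi>" unfolding S_def using mD by measurable
  have mQ: "measure Q K = measure \<pi> (snd -` K \<inter> space \<pi>)"
    using measure_distr[OF mf(2) Kb] dQ by simp
  have mP: "measure P T = measure \<pi> (fst -` T \<inter> space \<pi>)"
    using measure_distr[OF mf(1) Tb] dP by simp
  have sub: "snd -` K \<inter> space \<pi> \<subseteq> (fst -` T \<inter> space \<pi>) \<union> S"
  proof
    fix z assume z: "z \<in> snd -` K \<inter> space \<pi>"
    show "z \<in> (fst -` T \<inter> space \<pi>) \<union> S"
    proof (cases "nrm (snd z - fst z) \<le> c")
      case True
      then show ?thesis using z unfolding T_def thick_def by auto
    next
      case False
      then show ?thesis using z norm_minus_sym[OF nrm, of "snd z" "fst z"] unfolding S_def by auto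
    qed
  qed
  have m1: "measure \<pi> (snd -` K \<inter> space \<pi>) \<le> measure \<pi> (fst -` T \<inter> space \<pi>) + measure \<pi> S"
  proof -
    have "measure \<pi> (snd -` K \<inter> space \<pi>) \<le> measure \<pi> ((fst -` T \<inter> space \<pi>) \<union> S)"
      using sub Ss mf Tb by (intro pi.finite_measure_mono) auto
    also have "\<dots> \<le> measure \<pi> (fst -` T \<inter> space \<pi>) + measure \<pi> S"
      using Ss mf Tb by (intro measure_Un_le) auto
    finally show ?thesis .
  qed
  have "ennreal c * emeasure \<pi> S = (\<integral>\<^sup>+ z. ennreal c * indicator S z \<partial>\<pi>)"
    using Ss c by (simp add: nn_integral_cmult_indicator)
  also have "\<dots> \<le> (\<integral>\<^sup>+ z. ennreal (nrm (fst z - snd z)) \<partial>\<pi>)"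
    by (intro nn_integral_mono) (auto simp: S_def indicator_def intro!: ennreal_leI)
  also have "\<dots> < ennreal (\<rho> + s * s)" by (rule int)
  finally have "ennreal (c * measure \<pi> S) < ennreal (\<rho> + s * s)"
    using c by (simp add: pi.emeasure_eq_measure ennreal_mult)
  moreover have nn: "0 \<le> c * measure \<pi> S" using c by simp
  ultimately have "c * measure \<pi> S < \<rho> + s * s"
    using ennreal_less_iff[OF nn] by blast
  also have "\<rho> + s * s \<le> c * (\<theta> + s)"
    using mult_nonneg_nonneg[of r s] mult_nonneg_nonneg[of s \<theta>] r s th unfolding rho c_def
    by (simp add: ring_distribs)
  finally have "c * measure \<pi> S < c * (\<theta> + s)" .
  then have "measure \<pi> S \<le> \<theta> + s" using c by (simp add: mult_less_cancel_left_pos)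
  then show ?thesis using m1 mQ mP unfolding T_def c_def by linarith
qed

lemma transport:
  fixes nrm :: "'a::euclidean_space \<Rightarrow> real"
  assumes nrm: "is_norm nrm" and K: "compact K"
    and P: "prob_space P" "sets P = sets borel"
    and W: "wasserstein1 nrm P Q \<le> ennreal \<rho>"
    and r: "r \<ge> 0" and th: "\<theta> > 0" and rho: "\<rho> = r * \<theta>"
  shows "measure Q K - \<theta> \<le> measure P (thick nrm K r)"
proof -
  interpret P: prob_space P by (rule P(1))
  define A where "A n = thick nrm K (r + 1 / Suc n)" for n
  have "range A \<subseteq> sets P" unfolding A_def using thick_closed[OF nrm K] P(2) by auto
  moreover have "decseq A"
  proof (rule decseq_SucI)
    fix n
    have "1 / real (Suc (Suc n)) \<le> 1 / real (Suc n)"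
      by (intro divide_left_mono) auto
    then show "A (Suc n) \<subseteq> A n" unfolding A_def by (intro thick_mono) simp
  qed
  ultimately have lim: "(\<lambda>n. measure P (A n)) \<longlonglongrightarrow> measure P (\<Inter>i. A i)"
    by (rule P.finite_Lim_measure_decseq)
  have eq: "(\<Inter>i. A i) = thick nrm K r" unfolding A_def by (rule thick_Inter[OF nrm K])
  have l1: "(\<lambda>n. measure P (A n)) \<longlonglongrightarrow> measure P (thick nrm K r)"
    using lim unfolding eq .
  have l3: "(\<lambda>n. 1 / real (Suc n)) \<longlonglongrightarrow> 0"
    using LIMSEQ_inverse_real_of_nat by (simp add: inverse_eq_divide)
  have lim2: "(\<lambda>n. measure P (A n) + \<theta> + 1 / real (Suc n)) \<longlonglongrightarrow> measure P (thick nrm K r) + \<theta> + 0"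
    by (intro tendsto_add l1 l3 tendsto_const)
  have st: "measure Q K \<le> measure P (A n) + \<theta> + 1 / real (Suc n)" for n
    unfolding A_def by (rule transport_step[OF nrm K W r th rho]) simp
  have "measure Q K \<le> measure P (thick nrm K r) + \<theta> + 0"
    by (rule LIMSEQ_le_const[OF lim2]) (use st in blast)
  then show ?thesis by simp
qed



lemma polish_borel:
  fixes \<Xi> :: "'a::{metric_space} set"
  assumes "polish_subset \<Xi>"
  shows "\<Xi> \<in> sets borel"
proof -
  have cm: "completely_metrizable_space (subtopology euclidean \<Xi>)"
    using assms unfolding polish_subset_def by blast
  have sub: "\<Xi> \<subseteq> topspace euclidean" by simp
  have "gdelta_in euclidean \<Xi>"
    using completely_metrizable_space_imp_gdelta_in[OF metrizable_space_euclidean sub cm] .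
  from gdelta_in_descending[THEN iffD1, OF this] obtain C
    where C: "\<forall>n. openin euclidean (C n)" "\<forall>n. C (Suc n) \<subseteq> C n" "\<Inter>(range C) = \<Xi>"
    by blast
  have "C n \<in> sets borel" for n using C(1) by simp
  then have "(\<Inter>n. C n) \<in> sets borel"
    by (intro sets.countable_INT'') auto
  then show ?thesis using C(3) by simp
qed

theorem corollary1:
  fixes M :: "'w measure"
    and \<Xi> :: "(real ^ 'd) set"
    and nrm :: "real ^ 'd \<Rightarrow> real"
    and \<xi> :: "nat \<Rightarrow> 'w \<Rightarrow> real ^ 'd"
    and \<rho> :: "real \<Rightarrow> real"
    and \<X> :: "(real ^ 'n) set"
    and g :: "real ^ 'n \<Rightarrow> real ^ 'd \<Rightarrow> real"
    and \<epsilon> \<delta> \<alpha> \<theta> :: real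
    and N :: nat
  assumes "prob_space M"
    and "polish_subset \<Xi>"
    and "is_norm nrm"
    and "\<And>i. i \<ge> 1 \<Longrightarrow> \<xi> i \<in> borel_measurable M"
    and "\<And>i \<omega>. i \<ge> 1 \<Longrightarrow> \<omega> \<in> space M \<Longrightarrow> \<xi> i \<omega> \<in> \<Xi>"
    and "prob_space.indep_vars M (\<lambda>_. borel) \<xi> {1..}"
    and "\<And>t. t \<ge> 0 \<Longrightarrow> \<rho> t \<ge> 0"
    and "\<rho> 0 = 0"
    and "\<And>i k. i \<ge> 1 \<Longrightarrow>
           wasserstein1 nrm (distr M borel (\<xi> i)) (distr M borel (\<xi> (i + k))) \<le> ennreal (\<rho> (real k))"
    and "finite \<X>"
    and "\<And>x. g x \<in> borel_measurable borel"
    and "0 < \<epsilon>" and "\<epsilon> \<le> 1"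
    and "0 < \<delta>" and "\<delta> < 1"
    and "0 < \<alpha>" and "\<alpha> < \<epsilon>"
    and "0 < \<theta>" and "\<theta> < \<epsilon> - \<alpha>"
    and "N > 0"
    and "real N \<ge> 1 / (2 * (\<epsilon> - \<alpha> - \<theta>)\<^sup>2) * ln (real (card \<X>) / \<delta>)"
  shows "\<exists>A \<in> sets M. prob_space.prob M A \<ge> 1 - \<delta> \<and>
           A \<subseteq> {\<omega> \<in> space M.
             {x \<in> \<X>. (\<Sum>i = 1..N.
                  (if \<exists>u \<in> \<Xi>. nrm (u - \<xi> i \<omega>) \<le> \<rho> (real (N + 1 - i)) / \<theta> \<and> g x u > 0
                   then 1 else 0)) / real N \<le> \<alpha>}
             \<subseteq> {x \<in> \<X>. prob_space.prob M {\<omega>'\<in>space M. g x (\<xi> (N + 1) \<omega>') > 0} \<le> \<epsilon>}}"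
proof -
  note nrm = assms(3)
  note xim = assms(4)
  note xiX = assms(5)
  note W = assms(9)
  note gm = assms(11)
  interpret prob_space M by (rule assms(1))
  have indep: "indep_vars (\<lambda>_. borel) \<xi> {1..}" using assms(6) .
  define c where "c = \<epsilon> - \<alpha> - \<theta>"
  have c: "c > 0" unfolding c_def using assms(19) by simp
  have XiB: "\<Xi> \<in> sets borel" by (rule polish_borel[OF assms(2)])
  define V where "V x \<omega> = (\<Sum>i = 1..N.
                  (if \<exists>u \<in> \<Xi>. nrm (u - \<xi> i \<omega>) \<le> \<rho> (real (N + 1 - i)) / \<theta> \<and> g x u > 0
                   then 1 else 0)) / real N" for x \<omega>
  define pr where "pr x = prob {\<omega>'\<in>space M. g x (\<xi> (N + 1) \<omega>') > 0}" for x
  have per: "\<exists>E\<in>sets M. prob E \<le> exp (- 2 * real N * c\<^sup>2) \<and> {\<omega>\<in>space M. V x \<omega> \<le> \<alpha>} \<subseteq> E"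
    if x: "x \<in> \<X>" "pr x > \<epsilon>" for x
  proof -
    define Q where "Q = distr M borel (\<xi> (N + 1))"
    have mN: "\<xi> (N + 1) \<in> borel_measurable M" using xim by simp
    define B' where "B' = {u\<in>\<Xi>. g x u > 0}"
    have "g x -` {0<..} \<inter> space borel \<in> sets borel" by (rule measurable_sets[OF gm]) simp
    moreover have "B' = \<Xi> \<inter> (g x -` {0<..} \<inter> space borel)" unfolding B'_def by auto
    ultimately have B'b: "B' \<in> sets borel" using XiB by auto
    have QB: "emeasure Q B' = ennreal (pr x)"
    proof -
      have "emeasure Q B' = emeasure M (\<xi> (N + 1) -` B' \<inter> space M)"
        unfolding Q_def using mN B'b by (simp add: emeasure_distr)
      also have "\<xi> (N + 1) -` B' \<inter> space M = {\<omega>'\<in>space M. g x (\<xi> (N + 1) \<omega>') > 0}"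
        unfolding B'_def using xiX[of "N+1"] by auto
      finally show ?thesis unfolding pr_def by (simp add: emeasure_eq_measure)
    qed
    have sQ: "sets Q = sets borel" unfolding Q_def by simp
    have "emeasure Q (space Q) \<noteq> \<infinity>"
      using prob_space.emeasure_space_1[OF prob_space_distr[OF mN]] unfolding Q_def by simp
    from inner_regular[OF sQ this B'b] QB
    have S: "(SUP K \<in> {K. K \<subseteq> B' \<and> compact K}. emeasure Q K) = ennreal (pr x)" by simp
    have "ennreal \<epsilon> < ennreal (pr x)" using x(2) assms(12) by (intro ennreal_lessI) auto
    then have "ennreal \<epsilon> < (SUP K \<in> {K. K \<subseteq> B' \<and> compact K}. emeasure Q K)"
      unfolding S .
    then obtain K where K: "K \<subseteq> B'" "compact K" and QK: "ennreal \<epsilon> < emeasure Q K"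
      by (auto simp: less_SUP_iff)
    have QK': "\<epsilon> < measure Q K"
    proof -
      have "emeasure Q K = ennreal (measure Q K)"
      proof -
        interpret Qp: prob_space Q unfolding Q_def by (rule prob_space_distr[OF mN])
        show ?thesis by (rule Qp.emeasure_eq_measure)
      qed
      then have "ennreal \<epsilon> < ennreal (measure Q K)" using QK by simp
      then show ?thesis using ennreal_less_iff[of \<epsilon>] assms(12) by simp
    qed
    define r where "r i = \<rho> (real (N + 1 - i)) / \<theta>" for i
    define T where "T i = thick nrm K (r i)" for i
    have Tb: "T i \<in> sets borel" for i unfolding T_def using thick_closed[OF nrm K(2)] by simp
    define Y where "Y i \<omega> = (indicator (T i) (\<xi> i \<omega>) :: real)" for i \<omega>
    have EY: "expectation (Y i) \<ge> measure Q K - \<theta>" if i: "i \<in> {1..N}" for i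
    proof -
      have mi: "\<xi> i \<in> borel_measurable M" using xim i by simp
      define P where "P = distr M borel (\<xi> i)"
      have WP: "wasserstein1 nrm P Q \<le> ennreal (\<rho> (real (N + 1 - i)))"
        using W[of i "N + 1 - i"] i unfolding P_def Q_def by simp
      have r0: "r i \<ge> 0" unfolding r_def using assms(7) assms(18) by simp
      have "measure Q K - \<theta> \<le> measure P (T i)"
      proof -
        have Pps: "prob_space P" unfolding P_def by (rule prob_space_distr[OF mi])
        have sP: "sets P = sets borel" unfolding P_def by simp
        have rh: "\<rho> (real (N + 1 - i)) = r i * \<theta>" unfolding r_def using assms(18) by simp
        show ?thesis unfolding T_def by (rule transport[OF nrm K(2) Pps sP WP r0 assms(18) rh])
      qed
      also have "measure P (T i) = prob (\<xi> i -` T i \<inter> space M)"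
        unfolding P_def using mi Tb by (simp add: measure_distr)
      also have "\<dots> = expectation (Y i)"
      proof -
        have "expectation (Y i) = expectation (indicator (\<xi> i -` T i \<inter> space M))"
          by (intro Bochner_Integration.integral_cong) (auto simp: Y_def indicator_def)
        then show ?thesis by simp
      qed
      finally show ?thesis .
    qed
    define \<mu> where "\<mu> = (\<Sum>i\<in>{1..N}. expectation (Y i))"
    interpret H: Hoeffding_ineq M "{1..N}" Y "\<lambda>_. 0" "\<lambda>_. 1" \<mu>
    proof unfold_locales
      show "indep_vars (\<lambda>_. borel) Y {1..N}"
        unfolding Y_def
        by (rule indep_vars_compose2[OF indep_vars_subset[OF indep]]) (use Tb in auto)
      show "AE x in M. Y i x \<in> {0..1}" for i by (intro AE_I2) (auto simp: Y_def indicator_def)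
    qed (auto simp: \<mu>_def)
    have mu: "\<mu> \<ge> real N * (measure Q K - \<theta>)"
    proof -
      have "(\<Sum>i\<in>{1..N}. measure Q K - \<theta>) \<le> \<mu>" unfolding \<mu>_def by (intro sum_mono EY)
      then show ?thesis by simp
    qed
    define t where "t = \<mu> - real N * \<alpha>"
    have t: "t \<ge> real N * c"
    proof -
      have "real N * c \<le> real N * (measure Q K - \<theta> - \<alpha>)"
        using QK' c_def by (intro mult_left_mono) auto
      then show ?thesis using mu unfolding t_def by (simp add: algebra_simps)
    qed
    have Nc: "real N * c > 0" using c assms(20) by simp
    define E where "E = {\<omega>\<in>space M. (\<Sum>i\<in>{1..N}. Y i \<omega>) \<le> \<mu> - t}"
    have Ym: "Y i \<in> borel_measurable M" if "i \<in> {1..N}" for i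
      unfolding Y_def using xim[of i] that Tb[of i]
      by (intro measurable_compose[OF _ borel_measurable_indicator]) auto
    have Ys: "(\<lambda>\<omega>. \<Sum>i\<in>{1..N}. Y i \<omega>) \<in> borel_measurable M"
      using Ym by (intro borel_measurable_sum) auto
    have meas: "(\<lambda>\<omega>. \<Sum>i\<in>{1..N}. Y i \<omega>) -` {..\<mu> - t} \<inter> space M \<in> sets M"
      by (rule measurable_sets[OF Ys]) simp
    have E_eq: "(\<lambda>\<omega>. \<Sum>i\<in>{1..N}. Y i \<omega>) -` {..\<mu> - t} \<inter> space M = E"
      unfolding E_def by auto
    have Em: "E \<in> sets M" using meas unfolding E_eq .
    have "prob E \<le> exp (- 2 * t\<^sup>2 / (\<Sum>i\<in>{1..N}. (1 - 0)\<^sup>2))"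
      unfolding E_def using t Nc assms(20) by (intro H.Hoeffding_ineq_le) auto
    also have "\<dots> = exp (- 2 * t\<^sup>2 / real N)" by simp
    also have "\<dots> \<le> exp (- 2 * (real N * c)\<^sup>2 / real N)"
    proof -
      have "(real N * c)\<^sup>2 \<le> t\<^sup>2" using t Nc by (intro power_mono) auto
      then show ?thesis using assms(20) by (simp add: divide_right_mono)
    qed
    also have "- 2 * (real N * c)\<^sup>2 / real N = - 2 * real N * c\<^sup>2"
      using assms(20) by (simp add: power2_eq_square)
    finally have pE: "prob E \<le> exp (- 2 * real N * c\<^sup>2)" .
    have sub: "{\<omega>\<in>space M. V x \<omega> \<le> \<alpha>} \<subseteq> E"
    proof safe
      fix \<omega> assume \<omega>: "\<omega> \<in> space M" "V x \<omega> \<le> \<alpha>"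
      have le: "Y i \<omega> \<le> (if \<exists>u \<in> \<Xi>. nrm (u - \<xi> i \<omega>) \<le> \<rho> (real (N + 1 - i)) / \<theta> \<and> g x u > 0
                   then 1 else 0)" for i
      proof (cases "\<xi> i \<omega> \<in> T i")
        case True
        then obtain u where "u \<in> K" "nrm (u - \<xi> i \<omega>) \<le> r i" unfolding T_def thick_def by auto
        then have "\<exists>u \<in> \<Xi>. nrm (u - \<xi> i \<omega>) \<le> \<rho> (real (N + 1 - i)) / \<theta> \<and> g x u > 0"
          using K(1) unfolding B'_def r_def by auto
        then show ?thesis unfolding Y_def by simp
      qed (simp add: Y_def)
      have "(\<Sum>i\<in>{1..N}. Y i \<omega>) \<le> (\<Sum>i = 1..N.
                  (if \<exists>u \<in> \<Xi>. nrm (u - \<xi> i \<omega>) \<le> \<rho> (real (N + 1 - i)) / \<theta> \<and> g x u > 0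
                   then 1 else 0))" by (intro sum_mono le)
      also have "\<dots> \<le> real N * \<alpha>"
        using \<omega>(2) assms(20) unfolding V_def by (simp add: divide_le_eq mult.commute)
      finally show "\<omega> \<in> E" unfolding E_def t_def using \<omega>(1) by simp
    qed
    show ?thesis using Em pE sub by blast
  qed
  define bad where "bad = {x\<in>\<X>. pr x > \<epsilon>}"
  have fb: "finite bad" unfolding bad_def using assms(10) by simp
  from per have "\<forall>x\<in>bad. \<exists>E. E \<in> sets M \<and> prob E \<le> exp (- 2 * real N * c\<^sup>2) \<and> {\<omega>\<in>space M. V x \<omega> \<le> \<alpha>} \<subseteq> E"
    unfolding bad_def by blast
  then have "\<exists>Ef. \<forall>x\<in>bad. Ef x \<in> sets M \<and> prob (Ef x) \<le> exp (- 2 * real N * c\<^sup>2) \<and> {\<omega>\<in>space M. V x \<omega> \<le> \<alpha>} \<subseteq> Ef x"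
    by (rule bchoice)
  then obtain Ef where Ef0: "\<forall>x\<in>bad. Ef x \<in> sets M \<and> prob (Ef x) \<le> exp (- 2 * real N * c\<^sup>2) \<and> {\<omega>\<in>space M. V x \<omega> \<le> \<alpha>} \<subseteq> Ef x"
    by blast
  have Ef: "\<And>x. x \<in> bad \<Longrightarrow> Ef x \<in> sets M"
    "\<And>x. x \<in> bad \<Longrightarrow> prob (Ef x) \<le> exp (- 2 * real N * c\<^sup>2)"
    "\<And>x. x \<in> bad \<Longrightarrow> {\<omega>\<in>space M. V x \<omega> \<le> \<alpha>} \<subseteq> Ef x"
    using Ef0 by auto
  define B where "B = (\<Union>x\<in>bad. Ef x)"
  have Bm: "B \<in> sets M" unfolding B_def using fb Ef(1) by auto
  have "prob B \<le> (\<Sum>x\<in>bad. prob (Ef x))"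
    unfolding B_def using fb Ef(1) by (intro finite_measure_subadditive_finite) auto
  also have "\<dots> \<le> (\<Sum>x\<in>bad. exp (- 2 * real N * c\<^sup>2))" by (intro sum_mono Ef(2))
  also have "\<dots> = real (card bad) * exp (- 2 * real N * c\<^sup>2)" by simp
  also have "\<dots> \<le> real (card \<X>) * exp (- 2 * real N * c\<^sup>2)"
    using assms(10) unfolding bad_def by (intro mult_right_mono) (auto intro: card_mono)
  also have "\<dots> \<le> \<delta>"
  proof (cases "card \<X> = 0")
    case True
    then show ?thesis using assms(14) by simp
  next
    case False
    then have cX: "real (card \<X>) > 0" by simp
    have "ln (real (card \<X>) / \<delta>) \<le> real N * (2 * c\<^sup>2)"
      using assms(21) c unfolding c_def by (simp add: divide_le_eq mult.commute)
    then have "ln (real (card \<X>) / \<delta>) \<le> 2 * real N * c\<^sup>2" by (simp add: mult_ac)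
    then have "exp (ln (real (card \<X>) / \<delta>)) \<le> exp (2 * real N * c\<^sup>2)" by simp
    then have "real (card \<X>) / \<delta> \<le> exp (2 * real N * c\<^sup>2)" using cX assms(14) by simp
    then have "real (card \<X>) \<le> \<delta> * exp (2 * real N * c\<^sup>2)" using assms(14) by (simp add: divide_le_eq mult.commute)
    then have "real (card \<X>) * exp (- 2 * real N * c\<^sup>2) \<le> \<delta> * exp (2 * real N * c\<^sup>2) * exp (- 2 * real N * c\<^sup>2)"
      by (intro mult_right_mono) auto
    also have "\<dots> = \<delta>" by (simp add: exp_minus field_simps)
    finally show ?thesis .
  qed
  finally have pB: "prob B \<le> \<delta>" .
  define A where "A = space M - B"
  have Am: "A \<in> sets M" unfolding A_def using Bm by auto
  have pA: "prob A \<ge> 1 - \<delta>" unfolding A_def using prob_compl[OF Bm] pB by simp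
  have "A \<subseteq> {\<omega> \<in> space M. {x \<in> \<X>. V x \<omega> \<le> \<alpha>} \<subseteq> {x \<in> \<X>. pr x \<le> \<epsilon>}}"
  proof safe
    fix \<omega> assume "\<omega> \<in> A" then show "\<omega> \<in> space M" unfolding A_def by simp
  next
    fix \<omega> x assume \<omega>: "\<omega> \<in> A" and x: "x \<in> \<X>" "V x \<omega> \<le> \<alpha>"
    show "pr x \<le> \<epsilon>"
    proof (rule ccontr)
      assume "\<not> pr x \<le> \<epsilon>"
      then have xb: "x \<in> bad" unfolding bad_def using x by auto
      have "\<omega> \<in> Ef x" using Ef(3)[OF xb] \<omega> x(2) unfolding A_def by auto
      then show False using \<omega> xb unfolding A_def B_def by auto
    qed
  qed
  then show ?thesis using Am pA unfolding V_def pr_def by blast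
qed

end
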